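(* Let $\Gamma$ be a $\mathbb Z^d$-periodic graph, $d\ge2$, with fundamental graph $\Gamma_*=(V_*,\mathcal E_* )$, $\nu=\#V_*$, and let $H=\Delta+Q$ with a real $\mathbb Z^d$-periodic potential $Q$, with spectral bands $\sigma_n=\sigma_n(H)=[\lambda_n^-,\lambda_n^+]$ (notation as in the context). (i) If $\Gamma$ is a loop graph, then $\lambda_n^-=\lambda_n(0)$ for all $n=1,\dots,\nu$. (ii) If $\Gamma$ is an exact loop graph with exact quasimomentum $\vartheta_0\in\mathbb T^d$, then $$\sigma_n=[\lambda_n^-,\lambda_n^+]=[\lambda_n(0),\lambda_n(\vartheta_0)]\quad\text{for all } n=1,\dots,\nu,\qquad \sum_{n=1}^\nu|\sigma_n|=2\beta,$$ where $\beta=\sum_{v\in V_*}\beta_v/\varkappa_v$ and $\beta_v$ is the number of bridges of $\Gamma_*$ starting at $v$. In particular, if moreover all bridges of $\Gamma_*$ are loops $(v,v)$ at one and the same vertex $v\in V_*$, then $$|\sigma(H)|=\sum_{n=1}^\nu|\sigma_n|=2\beta.$$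
   Context: Setting. $\Gamma=(V,\mathcal E)$ is a connected infinite graph, possibly with loops and multiple edges, on which $\mathbb Z^d$ acts freely by graph automorphisms ($v\mapsto v+m$), every vertex has finite degree, and the quotient graph $\Gamma_*=\Gamma/\mathbb Z^d=(V_*,\mathcal E_* )$ is finite, $\nu=\#V_*$. Each undirected edge is regarded as two oppositely oriented edges; $\mathcal A$ is the set of oriented edges of $\Gamma$, $\mathcal A_*=\mathcal A/\mathbb Z^d$. The degree $\varkappa_v$ is the number of oriented edges starting at $v$. $(\Delta f)(v)=f(v)-\sum_{(v,u)\in\mathcal A}\frac{1}{\sqrt{\varkappa_v\varkappa_u}}f(u)$ on $\ell^2(V)$, $H=\Delta+Q$ with $Q$ real and $Q(v+m)=Q(v)$. Edge indices. Fix a subtree $T$ of $\Gamma$ whose vertex set $V_0$ consists of $\nu$ pairwise non-$\mathbb Z^d$-equivalent vertices; write each $v\in V$ uniquely as $v=v_0+[v]$, $v_0\in V_0$, $[v]\in\mathbb Z^d$; the index of $\mathbf e=(u,v)$ is $\tau(\mathbf e)=[v]-[u]$, shift invariant and thus defined on $\mathcal A_*$. Bridges are edges with nonzero index; $\mathcal B_*$ is the set of bridges of $\Gamma_*$. Loop graphs. $\Gamma$ is a loop graph if every bridge of $\Gamma_*$ is a loop, i.e. of the form $(v,v)$, $v\in V_*$. A loop graph is an exact loop graph if there is $\vartheta_0\in\mathbb T^d$ with $\cos\langle\tau(\mathbf e),\vartheta_0\rangle=-1$ for all $\mathbf e\in\mathcal B_*$; such $\vartheta_0$ is called an exact quasimomentum.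 Fiber operators and bands. For $\vartheta\in\mathbb T^d=\mathbb R^d/(2\pi\mathbb Z)^d$: $(\Delta(\vartheta)f)(v)=f(v)-\sum_{\mathbf e=(v,u)\in\mathcal A_*}\frac{e^{i\langle\tau(\mathbf e),\vartheta\rangle}}{\sqrt{\varkappa_v\varkappa_u}}f(u)$ on $\ell^2(V_* )$, $H(\vartheta)=\Delta(\vartheta)+Q$; $H$ is unitarily equivalent to the direct integral of $H(\vartheta)$. $\lambda_1(\vartheta)\le\dots\le\lambda_\nu(\vartheta)$ are the eigenvalues of $H(\vartheta)$ and $\sigma_n(H)=[\lambda_n^-,\lambda_n^+]=\lambda_n(\mathbb T^d)$; $\sigma(H)=\bigcup_n\sigma_n(H)$. *)

theory Defs
  imports "HOL-Analysis.Analysis" "HOL-Computational_Algebra.Polynomial"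
begin

text \<open>
A Z^d-periodic graph is encoded through its fundamental (quotient) graph:
vertices of type 'v (finite, V_*), oriented edges of type 'e (finite, A_*),
maps src, tgt, the edge reversal rv and the edge index tau :: 'e => int^'d.
The periodic graph Gamma itself is the graph on 'v \<times> int^'d with an oriented
edge from (src e, m) to (tgt e, m + tau e) for every e and m.
\<close>

definition periodic_graph_data ::
  "('e::finite \<Rightarrow> 'v::finite) \<Rightarrow> ('e \<Rightarrow> 'v) \<Rightarrow> ('e \<Rightarrow> 'e) \<Rightarrow> ('e \<Rightarrow> int^'d::finite) \<Rightarrow> bool" where
  "periodic_graph_data src tgt rv tau \<longleftrightarrow>
     (\<forall>e. rv (rv e) = e \<and> rv e \<noteq> e \<and> src (rv e) = tgt e \<and> tgt (rv e) = src e
          \<and> tau (rv e) = - tau e)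
     \<comment> \<open>indices come from a subtree T whose vertices form a fundamental domain:
        the zero-index edges of the quotient graph contain a spanning tree\<close>
     \<and> (\<exists>T. T \<subseteq> {e. tau e = 0} \<and> (\<forall>e\<in>T. rv e \<in> T)
            \<and> (\<forall>u w. (u, w) \<in> ({(src e, tgt e) | e. e \<in> T})\<^sup>*))
     \<comment> \<open>the periodic graph Gamma is connected\<close>
     \<and> (\<forall>x y. (x, y) \<in> ({((src e, m), (tgt e, m + tau e)) | e m. True})\<^sup>*)"

definition deg :: "('e::finite \<Rightarrow> 'v) \<Rightarrow> 'v \<Rightarrow> nat" where
  "deg src v = card {e. src e = v}"

definition ip :: "int^'d::finite \<Rightarrow> real^'d \<Rightarrow> real" where
  "ip m \<theta> = (\<Sum>j\<in>UNIV. real_of_int (m $ j) * \<theta> $ j)"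

definition fiber_op ::
  "('e::finite \<Rightarrow> 'v::finite) \<Rightarrow> ('e \<Rightarrow> 'v) \<Rightarrow> ('e \<Rightarrow> int^'d::finite) \<Rightarrow> ('v \<Rightarrow> real)
    \<Rightarrow> real^'d \<Rightarrow> complex^'v^'v" where
  "fiber_op src tgt tau Q \<theta> = (\<chi> v u.
      (if v = u then complex_of_real (1 + Q v) else 0)
      - (\<Sum>e\<in>{e. src e = v \<and> tgt e = u}.
           cis (ip (tau e) \<theta>) / complex_of_real (sqrt (real (deg src v) * real (deg src u)))))"

definition char_poly_cart :: "complex^'n::finite^'n \<Rightarrow> complex poly" where
  "char_poly_cart A = det (\<chi> i j. (if i = j then [:0, 1:] else 0) - [:A $ i $ j:])"

text \<open>eigenvalues (with multiplicity) of a Hermitian matrix, in increasing order,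
  indexed from 1: lambda_1 <= ... <= lambda_nu\<close>
definition eigval :: "complex^'n::finite^'n \<Rightarrow> nat \<Rightarrow> real" where
  "eigval A n = sorted_list_of_multiset (image_mset Re (proots (char_poly_cart A))) ! (n - 1)"

definition band_fun ::
  "('e::finite \<Rightarrow> 'v::finite) \<Rightarrow> ('e \<Rightarrow> 'v) \<Rightarrow> ('e \<Rightarrow> int^'d::finite) \<Rightarrow> ('v \<Rightarrow> real)
    \<Rightarrow> nat \<Rightarrow> real^'d \<Rightarrow> real" where
  "band_fun src tgt tau Q n \<theta> = eigval (fiber_op src tgt tau Q \<theta>) n"

definition band ::
  "('e::finite \<Rightarrow> 'v::finite) \<Rightarrow> ('e \<Rightarrow> 'v) \<Rightarrow> ('e \<Rightarrow> int^'d::finite) \<Rightarrow> ('v \<Rightarrow> real)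
    \<Rightarrow> nat \<Rightarrow> real set" where
  "band src tgt tau Q n = range (band_fun src tgt tau Q n)"

definition band_min where "band_min src tgt tau Q n = Inf (band src tgt tau Q n)"
definition band_max where "band_max src tgt tau Q n = Sup (band src tgt tau Q n)"

definition spectrum_H ::
  "('e::finite \<Rightarrow> 'v::finite) \<Rightarrow> ('e \<Rightarrow> 'v) \<Rightarrow> ('e \<Rightarrow> int^'d::finite) \<Rightarrow> ('v \<Rightarrow> real) \<Rightarrow> real set" where
  "spectrum_H src tgt tau Q = (\<Union>n\<in>{1..CARD('v)}. band src tgt tau Q n)"

definition is_loop_graph :: "('e \<Rightarrow> 'v) \<Rightarrow> ('e \<Rightarrow> 'v) \<Rightarrow> ('e \<Rightarrow> int^'d::finite) \<Rightarrow> bool" where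
  "is_loop_graph src tgt tau \<longleftrightarrow> (\<forall>e. tau e \<noteq> 0 \<longrightarrow> src e = tgt e)"

definition exact_quasimomentum :: "('e \<Rightarrow> int^'d::finite) \<Rightarrow> real^'d \<Rightarrow> bool" where
  "exact_quasimomentum tau \<theta>0 \<longleftrightarrow> (\<forall>e. tau e \<noteq> 0 \<longrightarrow> cos (ip (tau e) \<theta>0) = -1)"

definition beta_const :: "('e::finite \<Rightarrow> 'v::finite) \<Rightarrow> ('e \<Rightarrow> int^'d::finite) \<Rightarrow> real" where
  "beta_const src tau = (\<Sum>v\<in>UNIV. real (card {e. src e = v \<and> tau e \<noteq> 0}) / real (deg src v))"

end

theory Submission imports Defs begin

lemma sym_inner:
  fixes A :: "real^'n::finite^'n"
  assumes "transpose A = A"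
  shows "(A *v x) \<bullet> y = x \<bullet> (A *v y)"
proof -
  have "(A *v x) = x v* A" using vector_transpose_matrix[of x A] assms by simp
  then show ?thesis by (simp add: dot_lmul_matrix)
qed

lemma orthonormal_facts:
  fixes q :: "nat \<Rightarrow> real^'n::finite"
  assumes on: "\<forall>i\<in>I. \<forall>j\<in>I. q i \<bullet> q j = (if i = j then 1 else 0)" and fin: "finite I"
  shows "inj_on q I" "independent (q ` I)" "dim (span (q ` I)) = card I"
proof -
  show inj: "inj_on q I"
  proof (rule inj_onI)
    fix i j assume "i \<in> I" "j \<in> I" "q i = q j"
    then have "q i \<bullet> q j = 1" using on by (metis)
    then show "i = j" using on \<open>i \<in> I\<close> \<open>j \<in> I\<close> by (metis zero_neq_one)
  qed
  show ind: "independent (q ` I)"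
  proof (rule pairwise_orthogonal_independent)
    show "pairwise orthogonal (q ` I)"
      unfolding pairwise_def orthogonal_def using on by auto
    show "0 \<notin> q ` I"
    proof
      assume "0 \<in> q ` I" then obtain i where "i \<in> I" "q i = 0" by auto
      then show False using on by (metis inner_zero_left zero_neq_one)
    qed
  qed
  show "dim (span (q ` I)) = card I"
    using dim_span_eq_card_independent[OF ind] card_image[OF inj] by simp
qed

lemma perp_dim:
  fixes q :: "nat \<Rightarrow> real^'n::finite"
  assumes on: "\<forall>i\<in>I. \<forall>j\<in>I. q i \<bullet> q j = (if i = j then 1 else 0)" and fin: "finite I"
  shows "dim {y. \<forall>i\<in>I. y \<bullet> q i = 0} = CARD('n) - card I"
proof -
  have eq: "{y. \<forall>i\<in>I. y \<bullet> q i = 0} = {y \<in> UNIV. \<forall>x\<in>span (q ` I). orthogonal x y}"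
  proof (intro set_eqI iffI)
    fix y assume "y \<in> {y. \<forall>i\<in>I. y \<bullet> q i = 0}"
    then have "\<forall>x\<in>q ` I. orthogonal y x" by (auto simp: orthogonal_def)
    then show "y \<in> {y \<in> UNIV. \<forall>x\<in>span (q ` I). orthogonal x y}"
      using orthogonal_to_span orthogonal_commute by blast
  next
    fix y assume "y \<in> {y \<in> UNIV. \<forall>x\<in>span (q ` I). orthogonal x y}"
    then show "y \<in> {y. \<forall>i\<in>I. y \<bullet> q i = 0}"
      by (auto simp: orthogonal_def) (metis inner_commute span_base imageI)
  qed
  have "dim {y \<in> UNIV. \<forall>x\<in>span (q ` I). orthogonal x y} + dim (span (q ` I)) = dim (UNIV :: (real^'n) set)"
    by (rule dim_subspace_orthogonal_to_vectors) auto
  then show ?thesis using orthonormal_facts(3)[OF on fin] eq by simp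
qed

lemma quad_nonneg_lin_zero:
  fixes a b :: real
  assumes "\<And>t. 0 \<le> 2 * t * a + t\<^sup>2 * b" and "a \<ge> 0"
  shows "a = 0"
proof (rule ccontr)
  assume "a \<noteq> 0" then have a: "a > 0" using assms(2) by simp
  define s where "s = \<bar>b\<bar> + 1"
  have s: "s > 0" unfolding s_def by simp
  define t where "t = - a / s"
  have "t\<^sup>2 * b \<le> t\<^sup>2 * \<bar>b\<bar>" by (simp add: mult_left_mono)
  also have "\<dots> < t\<^sup>2 * s"
  proof (rule mult_strict_left_mono)
    show "\<bar>b\<bar> < s" unfolding s_def by simp
    show "0 < t\<^sup>2" using a s unfolding t_def by simp
  qed
  also have "t\<^sup>2 * s = a\<^sup>2 / s" using s unfolding t_def by (simp add: power2_eq_square field_simps)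
  finally have "2 * t * a + t\<^sup>2 * b < 2 * t * a + a\<^sup>2 / s" by simp
  also have "2 * t * a + a\<^sup>2 / s = - (a\<^sup>2 / s)" using s unfolding t_def by (simp add: power2_eq_square field_simps)
  also have "\<dots> < 0" using a s by simp
  finally show False using assms(1)[of t] by simp
qed

definition orthonormal_on :: "nat set \<Rightarrow> (nat \<Rightarrow> real^'n::finite) \<Rightarrow> bool" where
  "orthonormal_on I q \<longleftrightarrow> (\<forall>i\<in>I. \<forall>j\<in>I. q i \<bullet> q j = (if i = j then 1 else 0))"

lemma spec_step:
  fixes A :: "real^'n::finite^'n"
  assumes sym: "transpose A = A"
  shows "m \<le> CARD('n) \<Longrightarrow> \<exists>q \<mu>. orthonormal_on {1..m} q \<and> (\<forall>i\<in>{1..m}. A *v q i = \<mu> i *\<^sub>R q i)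
     \<and> (\<forall>k\<in>{1..m}. \<forall>x. norm x = 1 \<and> (\<forall>i\<in>{1..<k}. x \<bullet> q i = 0) \<longrightarrow> \<mu> k \<le> x \<bullet> (A *v x))"
proof (induction m)
  case 0 show ?case by (auto simp: orthonormal_on_def)
next
  case (Suc m)
  then obtain q \<mu> where orth: "orthonormal_on {1..m} q" and eig: "\<forall>i\<in>{1..m}. A *v q i = \<mu> i *\<^sub>R q i"
    and mini: "\<forall>k\<in>{1..m}. \<forall>x. norm x = 1 \<and> (\<forall>i\<in>{1..<k}. x \<bullet> q i = 0) \<longrightarrow> \<mu> k \<le> x \<bullet> (A *v x)"
    by auto
  define W where "W = {x::real^'n. \<forall>i\<in>{1..m}. x \<bullet> q i = 0}"
  have subW: "subspace W" unfolding W_def subspace_def by (auto simp: inner_add_left)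
  have dimW: "dim W = CARD('n) - m" unfolding W_def
    using perp_dim[of "{1..m}" q] orth by (simp add: orthonormal_on_def)
  have "\<not> W \<subseteq> {0}"
  proof
    assume "W \<subseteq> {0}"
    then have "dim W \<le> dim {0::real^'n}" by (rule dim_subset)
    then show False using dimW Suc.prems by simp
  qed
  then obtain x0 where x0: "x0 \<in> W" "x0 \<noteq> 0" by auto
  define S where "S = W \<inter> sphere 0 1"
  have cS: "compact S" unfolding S_def by (intro closed_Int_compact closed_subspace subW compact_sphere)
  have "x0 /\<^sub>R norm x0 \<in> S" unfolding S_def using x0 subW by (auto simp: subspace_scale)
  then have neS: "S \<noteq> {}" by auto
  have cont: "continuous_on S (\<lambda>x. x \<bullet> (A *v x))"
    by (intro continuous_on_inner continuous_on_id matrix_vector_mult_linear_continuous_on)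
  obtain v where vS: "v \<in> S" and vmin: "\<And>y. y \<in> S \<Longrightarrow> v \<bullet> (A *v v) \<le> y \<bullet> (A *v y)"
    using continuous_attains_inf[OF cS neS cont] by auto
  define \<mu>v where "\<mu>v = v \<bullet> (A *v v)"
  have vW: "v \<in> W" and vn: "norm v = 1" using vS unfolding S_def by auto
  have vv: "v \<bullet> v = 1" using vn by (simp add: norm_eq_1)
  have AW: "A *v y \<in> W" if "y \<in> W" for y
    unfolding W_def mem_Collect_eq
  proof
    fix i assume i: "i \<in> {1..m}"
    have "(A *v y) \<bullet> q i = y \<bullet> (A *v q i)" by (rule sym_inner[OF sym])
    also have "\<dots> = \<mu> i * (y \<bullet> q i)" using eig i by simp
    also have "\<dots> = 0" using that i unfolding W_def by simp
    finally show "(A *v y) \<bullet> q i = 0" .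
  qed
  define r where "r = A *v v - \<mu>v *\<^sub>R v"
  have rW: "r \<in> W" unfolding r_def using AW[OF vW] vW subW by (simp add: subspace_diff subspace_scale)
  have rv: "r \<bullet> v = 0" unfolding r_def \<mu>v_def using vv by (simp add: inner_diff_left inner_diff_right inner_commute)
  have rAv: "r \<bullet> (A *v v) = r \<bullet> r"
  proof -
    have "v \<bullet> (A *v v) = \<mu>v" "(A *v v) \<bullet> v = \<mu>v" unfolding \<mu>v_def by (simp_all add: inner_commute)
    then show ?thesis unfolding r_def using vv
      by (simp add: inner_diff_left inner_diff_right power2_eq_square algebra_simps)
  qed
  have key: "0 \<le> 2 * t * (r \<bullet> r) + t\<^sup>2 * (r \<bullet> (A *v r) - \<mu>v * (r \<bullet> r))" for t
  proof -
    define y where "y = v + t *\<^sub>R r"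
    have yW: "y \<in> W" unfolding y_def using vW rW subW by (simp add: subspace_add subspace_scale)
    have yy: "y \<bullet> y = 1 + t\<^sup>2 * (r \<bullet> r)"
      unfolding y_def using vv rv by (simp add: inner_add_left inner_add_right inner_commute power2_eq_square)
    have ypos: "y \<bullet> y > 0" using yy by (simp add: add_pos_nonneg)
    then have yn: "norm y > 0" by (simp add: norm_eq_sqrt_inner)
    have "y /\<^sub>R norm y \<in> S" unfolding S_def using yW subW yn by (auto simp: subspace_scale)
    then have "\<mu>v \<le> (y /\<^sub>R norm y) \<bullet> (A *v (y /\<^sub>R norm y))" unfolding \<mu>v_def by (rule vmin)
    also have "\<dots> = (y \<bullet> (A *v y)) / (y \<bullet> y)"
      by (simp add: matrix_vector_mult_scaleR power2_norm_eq_inner[symmetric] power2_eq_square field_simps)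
    finally have "\<mu>v * (y \<bullet> y) \<le> y \<bullet> (A *v y)" using ypos by (simp add: pos_le_divide_eq)
    moreover have "y \<bullet> (A *v y) = \<mu>v + 2 * t * (r \<bullet> r) + t\<^sup>2 * (r \<bullet> (A *v r))"
    proof -
      have "v \<bullet> (A *v r) = r \<bullet> (A *v v)" using sym_inner[OF sym, of r v] by (simp add: inner_commute)
      then show ?thesis unfolding y_def
        by (simp add: matrix_vector_right_distrib matrix_vector_mult_scaleR inner_add_left inner_add_right
            rAv \<mu>v_def power2_eq_square algebra_simps)
    qed
    ultimately show ?thesis using yy by (simp add: algebra_simps)
  qed
  have "r \<bullet> r = 0" by (rule quad_nonneg_lin_zero[OF key]) simp
  then have Av: "A *v v = \<mu>v *\<^sub>R v" unfolding r_def by simp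
  define q' where "q' = q(Suc m := v)"
  define \<mu>' where "\<mu>' = \<mu>(Suc m := \<mu>v)"
  have vq: "v \<bullet> q i = 0" if "i \<in> {1..m}" for i using vW that unfolding W_def by simp
  show ?case
  proof (intro exI conjI)
    show "orthonormal_on {1..Suc m} q'"
      using orth vv vq unfolding orthonormal_on_def q'_def
      by (auto simp: inner_commute)
    show "\<forall>i\<in>{1..Suc m}. A *v q' i = \<mu>' i *\<^sub>R q' i"
      using eig Av unfolding q'_def \<mu>'_def by (auto simp: le_Suc_eq)
    show "\<forall>k\<in>{1..Suc m}. \<forall>x. norm x = 1 \<and> (\<forall>i\<in>{1..<k}. x \<bullet> q' i = 0) \<longrightarrow> \<mu>' k \<le> x \<bullet> (A *v x)"
    proof (intro ballI allI impI)
      fix k x assume k: "k \<in> {1..Suc m}" and x: "norm x = 1 \<and> (\<forall>i\<in>{1..<k}. x \<bullet> q' i = 0)"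
      show "\<mu>' k \<le> x \<bullet> (A *v x)"
      proof (cases "k = Suc m")
        case True
        then have "x \<in> S" using x unfolding S_def W_def q'_def by auto
        then show ?thesis using vmin True unfolding \<mu>'_def \<mu>v_def by simp
      next
        case False
        then have "k \<in> {1..m}" using k by auto
        moreover have "\<forall>i\<in>{1..<k}. x \<bullet> q i = 0" using x False k unfolding q'_def by auto
        ultimately show ?thesis using mini x False unfolding \<mu>'_def by auto
      qed
    qed
  qed
qed

lemma ring_aux: fixes a x m b :: "'a::comm_ring_1" shows "a * (x - m) * b = x * (a * b) - a * m * b"
  by (simp add: algebra_simps)

definition cmat :: "real^'n::finite^'n \<Rightarrow> complex^'n^'n" where
  "cmat A = (\<chi> i j. complex_of_real (A $ i $ j))"

lemma char_poly_diag:
  fixes A P :: "real^'n::finite^'n" and c :: "'n \<Rightarrow> real"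
  assumes PP: "P ** transpose P = mat 1"
    and AP: "A = P ** (\<chi> i j. if i = j then c i else 0) ** transpose P"
  shows "char_poly_cart (cmat A) = (\<Prod>i\<in>UNIV. [:- complex_of_real (c i), 1:])"
proof -
  have Aij: "A $ i $ j = (\<Sum>k\<in>UNIV. P $ i $ k * c k * P $ j $ k)" for i j
  proof -
    have "(P ** (\<chi> i j. if i = j then c i else 0)) $ i $ k = P $ i $ k * c k" for k
      by (simp add: matrix_matrix_mult_def if_distrib cong: if_cong)
    then show ?thesis using AP by (simp add: matrix_matrix_mult_def transpose_def)
  qed
  have Iij: "(\<Sum>k\<in>UNIV. P $ i $ k * P $ j $ k) = (if i = j then 1 else 0)" for i j
  proof -
    have "(P ** transpose P) $ i $ j = (\<Sum>k\<in>UNIV. P $ i $ k * P $ j $ k)"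
      by (simp add: matrix_matrix_mult_def transpose_def)
    then show ?thesis using PP by (simp add: mat_def)
  qed
  define X :: "complex poly" where "X = [:0, 1:]"
  define Pc :: "complex poly^'n^'n" where "Pc = (\<chi> i j. [:complex_of_real (P $ i $ j):])"
  define D :: "complex poly^'n^'n" where "D = (\<chi> i j. if i = j then X - [:complex_of_real (c i):] else 0)"
  define M :: "complex poly^'n^'n" where
    "M = (\<chi> i j. (if i = j then [:0, 1:] else 0) - [:cmat A $ i $ j:])"
  have PcD: "(Pc ** D) $ i $ k = [:complex_of_real (P $ i $ k):] * (X - [:complex_of_real (c k):])" for i k
    unfolding Pc_def D_def by (simp add: matrix_matrix_mult_def if_distrib cong: if_cong)
  have "M = Pc ** D ** transpose Pc"
  proof (subst vec_eq_iff, intro allI, subst vec_eq_iff, intro allI)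
    fix i j
    have "(Pc ** D ** transpose Pc) $ i $ j
        = (\<Sum>k\<in>UNIV. [:complex_of_real (P $ i $ k):] * (X - [:complex_of_real (c k):]) * [:complex_of_real (P $ j $ k):])"
    proof -
      have "(Pc ** D ** transpose Pc) $ i $ j = (\<Sum>k\<in>UNIV. (Pc ** D) $ i $ k * transpose Pc $ k $ j)"
        unfolding matrix_matrix_mult_def[of "Pc ** D"] by simp
      then show ?thesis unfolding PcD by (simp add: transpose_def Pc_def)
    qed
    also have "\<dots> = (\<Sum>k\<in>UNIV. X * [:complex_of_real (P $ i $ k * P $ j $ k):]
                    - [:complex_of_real (P $ i $ k * c k * P $ j $ k):])"
      by (intro sum.cong refl) (simp only: ring_aux mult_to_poly of_real_mult)
    also have "\<dots> = X * [:complex_of_real (\<Sum>k\<in>UNIV. P $ i $ k * P $ j $ k):]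
                    - [:complex_of_real (\<Sum>k\<in>UNIV. P $ i $ k * c k * P $ j $ k):]"
      by (simp only: sum_subtractf sum_distrib_left sum_to_poly[symmetric] of_real_sum)
    also have "\<dots> = M $ i $ j"
      unfolding Iij Aij[symmetric] M_def cmat_def X_def by simp
    finally show "M $ i $ j = (Pc ** D ** transpose Pc) $ i $ j" by simp
  qed
  then have "det M = det Pc * det D * det (transpose Pc)" by (simp add: det_mul)
  also have "det Pc * det (transpose Pc) = 1"
  proof -
    have "Pc ** transpose Pc = mat 1"
    proof (subst vec_eq_iff, intro allI, subst vec_eq_iff, intro allI)
      fix i j
      have "(Pc ** transpose Pc) $ i $ j = [:complex_of_real (\<Sum>k\<in>UNIV. P $ i $ k * P $ j $ k):]"
        by (simp add: matrix_matrix_mult_def transpose_def Pc_def mult_to_poly sum_to_poly mult.commute)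
      then show "(Pc ** transpose Pc) $ i $ j = mat 1 $ i $ j" unfolding Iij by (simp add: mat_def)
    qed
    then show ?thesis by (metis det_mul det_I)
  qed
  then have "det Pc * det D * det (transpose Pc) = det D" by (simp add: algebra_simps)
  also have "det D = (\<Prod>i\<in>UNIV. D $ i $ i)" by (rule det_diagonal) (simp add: D_def)
  also have "\<dots> = (\<Prod>i\<in>UNIV. [:- complex_of_real (c i), 1:])" unfolding D_def X_def by simp
  finally show ?thesis unfolding char_poly_cart_def M_def .
qed

definition spec_data :: "real^'n::finite^'n \<Rightarrow> (nat \<Rightarrow> real^'n) \<Rightarrow> (nat \<Rightarrow> real) \<Rightarrow> bool" where
  "spec_data A q \<mu> \<longleftrightarrow> orthonormal_on {1..CARD('n)} q \<and> (\<forall>i\<in>{1..CARD('n)}. A *v q i = \<mu> i *\<^sub>R q i)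
     \<and> (\<forall>k\<in>{1..CARD('n)}. \<forall>x. norm x = 1 \<and> (\<forall>i\<in>{1..<k}. x \<bullet> q i = 0) \<longrightarrow> \<mu> k \<le> x \<bullet> (A *v x))"

lemma spec_exists:
  fixes A :: "real^'n::finite^'n"
  assumes "transpose A = A"
  shows "\<exists>q \<mu>. spec_data A q \<mu>"
  using spec_step[OF assms, of "CARD('n)"] unfolding spec_data_def by simp

lemma spec_sorted:
  fixes A :: "real^'n::finite^'n"
  assumes sd: "spec_data A q \<mu>" and "1 \<le> i" "i \<le> j" "j \<le> CARD('n)"
  shows "\<mu> i \<le> \<mu> j"
  using assms(3,4)
proof (induction j rule: dec_induct)
  case base then show ?case by simp
next
  case (step j)
  have on: "orthonormal_on {1..CARD('n)} q" and eig: "\<forall>i\<in>{1..CARD('n)}. A *v q i = \<mu> i *\<^sub>R q i"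
    and mini: "\<forall>k\<in>{1..CARD('n)}. \<forall>x. norm x = 1 \<and> (\<forall>i\<in>{1..<k}. x \<bullet> q i = 0) \<longrightarrow> \<mu> k \<le> x \<bullet> (A *v x)"
    using sd unfolding spec_data_def by auto
  have j1: "1 \<le> j" using step assms(2) by simp
  have qq: "q (Suc j) \<bullet> q (Suc j) = 1" using on step.prems unfolding orthonormal_on_def by auto
  then have n1: "norm (q (Suc j)) = 1" by (simp add: norm_eq_1)
  have "\<forall>l\<in>{1..<j}. q (Suc j) \<bullet> q l = 0" using on step.prems unfolding orthonormal_on_def by auto
  then have "\<mu> j \<le> q (Suc j) \<bullet> (A *v q (Suc j))" using mini n1 j1 step.prems by auto
  also have "\<dots> = \<mu> (Suc j)" using eig step.prems qq by simp
  finally show ?case using step by simp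
qed

lemma proots_prod_lin:
  "proots (\<Prod>k\<in>{1..n}. [:- c k, 1:]) = mset (map c [1..<Suc n])"
proof (induction n)
  case 0 then show ?case by simp
next
  case (Suc n)
  have ne: "(\<Prod>k\<in>{1..n}. [:- c k, 1:]) \<noteq> 0" by (simp add: prod_zero_iff)
  have "(\<Prod>k\<in>{1..Suc n}. [:- c k, 1:]) = (\<Prod>k\<in>{1..n}. [:- c k, 1:]) * [:- c (Suc n), 1:]"
    by (simp add: prod.cl_ivl_Suc)
  then have "proots (\<Prod>k\<in>{1..Suc n}. [:- c k, 1:]) = proots (\<Prod>k\<in>{1..n}. [:- c k, 1:]) + {# c (Suc n) #}"
    using proots_mult[OF ne, of "[:- c (Suc n), 1:]"] by (simp add: proots_linear_factor)
  then show ?case using Suc by simp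
qed

lemma spec_matrix:
  fixes A :: "real^'n::finite^'n"
  assumes sd: "spec_data A q \<mu>"
  shows "\<exists>(g::'n \<Rightarrow> nat) (P::real^'n^'n). bij_betw g UNIV {1..CARD('n)} \<and> P ** transpose P = mat 1 \<and> transpose P ** P = mat 1
     \<and> A = P ** (\<chi> i j. if i = j then \<mu> (g i) else 0) ** transpose P"
proof -
  let ?N = "CARD('n)"
  have on: "orthonormal_on {1..?N} q" and eig: "\<forall>i\<in>{1..?N}. A *v q i = \<mu> i *\<^sub>R q i"
    using sd unfolding spec_data_def by auto
  obtain h where h: "bij_betw h {1..?N} (UNIV :: 'n set)"
    using ex_bij_betw_nat_finite_1[of "UNIV :: 'n set"] by auto
  define g where "g = inv_into {1..?N} h"
  have g: "bij_betw g UNIV {1..?N}" unfolding g_def by (rule bij_betw_inv_into[OF h])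
  have gin: "g j \<in> {1..?N}" for j using g by (auto simp: bij_betw_def)
  have ginj: "g j = g j' \<longleftrightarrow> j = j'" for j j' using g by (auto simp: bij_betw_def inj_on_def)
  define P :: "real^'n^'n" where "P = (\<chi> i j. q (g j) $ i)"
  have PtP: "transpose P ** P = mat 1"
  proof (subst vec_eq_iff, intro allI, subst vec_eq_iff, intro allI)
    fix j j'
    have "(transpose P ** P) $ j $ j' = q (g j) \<bullet> q (g j')"
      by (simp add: matrix_matrix_mult_def transpose_def P_def inner_vec_def)
    also have "\<dots> = (if j = j' then 1 else 0)" using on gin ginj unfolding orthonormal_on_def by auto
    finally show "(transpose P ** P) $ j $ j' = mat 1 $ j $ j'" by (simp add: mat_def)
  qed
  then have PP: "P ** transpose P = mat 1" by (rule matrix_left_right_inverse1)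
  define L :: "real^'n^'n" where "L = (\<chi> i j. if i = j then \<mu> (g i) else 0)"
  have AP: "A ** P = P ** L"
  proof (subst vec_eq_iff, intro allI, subst vec_eq_iff, intro allI)
    fix i j
    have "(A ** P) $ i $ j = (A *v q (g j)) $ i"
      by (simp add: matrix_matrix_mult_def matrix_vector_mult_def P_def)
    also have "\<dots> = \<mu> (g j) * q (g j) $ i" using eig gin by simp
    also have "\<dots> = (P ** L) $ i $ j"
      by (simp add: matrix_matrix_mult_def L_def P_def if_distrib cong: if_cong)
    finally show "(A ** P) $ i $ j = (P ** L) $ i $ j" .
  qed
  have "A = A ** (P ** transpose P)" using PP by simp
  also have "\<dots> = P ** L ** transpose P" by (metis matrix_mul_assoc AP)
  finally have "A = P ** L ** transpose P" .
  then show ?thesis using g PP PtP unfolding L_def by blast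
qed

lemma eigval_spec:
  fixes A :: "real^'n::finite^'n"
  assumes sd: "spec_data A q \<mu>" and k: "k \<in> {1..CARD('n)}"
  shows "eigval (cmat A) k = \<mu> k"
proof -
  let ?N = "CARD('n)"
  obtain g :: "'n \<Rightarrow> nat" and P :: "real^'n^'n" where g: "bij_betw g UNIV {1..?N}" and PP: "P ** transpose P = mat 1"
    and AP: "A = P ** (\<chi> i j. if i = j then \<mu> (g i) else 0) ** transpose P"
    using spec_matrix[OF sd] by blast
  have cp: "char_poly_cart (cmat A) = (\<Prod>i\<in>UNIV. [:- complex_of_real (\<mu> (g i)), 1:])"
    using char_poly_diag[OF PP AP] by simp
  also have "\<dots> = (\<Prod>k\<in>{1..?N}. [:- complex_of_real (\<mu> k), 1:])"
    using prod.reindex_bij_betw[OF g, of "\<lambda>k. [:- complex_of_real (\<mu> k), 1:]"] by simp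
  finally have "proots (char_poly_cart (cmat A)) = mset (map (\<lambda>k. complex_of_real (\<mu> k)) [1..<Suc ?N])"
    using proots_prod_lin[of "\<lambda>k. complex_of_real (\<mu> k)" ?N] by simp
  then have "image_mset Re (proots (char_poly_cart (cmat A)))
      = mset (map Re (map (\<lambda>k. complex_of_real (\<mu> k)) [1..<Suc ?N]))"
    by (simp only: mset_map)
  also have "map Re (map (\<lambda>k. complex_of_real (\<mu> k)) [1..<Suc ?N]) = map \<mu> [1..<Suc ?N]" by simp
  finally have img: "image_mset Re (proots (char_poly_cart (cmat A))) = mset (map \<mu> [1..<Suc ?N])" .
  have srt: "sorted (map \<mu> [1..<Suc ?N])"
    by (rule sorted_map_mono[OF sorted_upt]) (auto simp: mono_on_def intro: spec_sorted[OF sd])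
  have "sorted_list_of_multiset (image_mset Re (proots (char_poly_cart (cmat A)))) = map \<mu> [1..<Suc ?N]"
    unfolding img sorted_list_of_multiset_mset using sorted_sort_id[OF srt] .
  moreover have "map \<mu> [1..<Suc ?N] ! (k - 1) = \<mu> k"
  proof -
    have "k - 1 < ?N" using k by (auto simp: atLeastAtMost_iff)
    then have "k - 1 < length [1..<Suc ?N]" by simp
    then have "map \<mu> [1..<Suc ?N] ! (k - 1) = \<mu> ([1..<Suc ?N] ! (k - 1))" by (rule nth_map)
    also have "[1..<Suc ?N] ! (k - 1) = k" using k by (subst nth_upt) auto
    finally show ?thesis .
  qed
  ultimately show ?thesis unfolding eigval_def by simp
qed

lemma spec_trace:
  fixes A :: "real^'n::finite^'n"
  assumes sd: "spec_data A q \<mu>"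
  shows "(\<Sum>k=1..CARD('n). \<mu> k) = trace A"
proof -
  obtain g :: "'n \<Rightarrow> nat" and P :: "real^'n^'n" where g: "bij_betw g UNIV {1..CARD('n)}" and PtP: "transpose P ** P = mat 1"
    and AP: "A = P ** (\<chi> i j. if i = j then \<mu> (g i) else 0) ** transpose P"
    using spec_matrix[OF sd] by blast
  define L :: "real^'n^'n" where "L = (\<chi> i j. if i = j then \<mu> (g i) else 0)"
  have "trace A = trace (P ** (L ** transpose P))" using AP unfolding L_def by (simp add: matrix_mul_assoc)
  also have "\<dots> = trace ((L ** transpose P) ** P)" by (rule trace_mul_sym)
  also have "\<dots> = trace L" by (simp only: matrix_mul_assoc[symmetric] PtP matrix_mul_rid)
  also have "\<dots> = (\<Sum>i\<in>UNIV. \<mu> (g i))" unfolding L_def trace_def by simp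
  also have "\<dots> = (\<Sum>k=1..CARD('n). \<mu> k)" using sum.reindex_bij_betw[OF g, of \<mu>] by simp
  finally show ?thesis by simp
qed

lemma orth_sum_inner:
  fixes q :: "nat \<Rightarrow> real^'n::finite"
  assumes on: "orthonormal_on I q" and fin: "finite I"
  shows "(\<Sum>i\<in>I. c i *\<^sub>R q i) \<bullet> (\<Sum>i\<in>I. d i *\<^sub>R q i) = (\<Sum>i\<in>I. c i * d i)"
proof -
  have "(\<Sum>i\<in>I. c i *\<^sub>R q i) \<bullet> (\<Sum>j\<in>I. d j *\<^sub>R q j) = (\<Sum>i\<in>I. c i * (q i \<bullet> (\<Sum>j\<in>I. d j *\<^sub>R q j)))"
    by (simp add: inner_sum_left)
  also have "\<dots> = (\<Sum>i\<in>I. \<Sum>j\<in>I. c i * d j * (q i \<bullet> q j))"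
    by (simp add: inner_sum_right sum_distrib_left mult.assoc)
  also have "\<dots> = (\<Sum>i\<in>I. \<Sum>j\<in>I. if i = j then c i * d j else 0)"
    using on unfolding orthonormal_on_def by (intro sum.cong refl) auto
  also have "\<dots> = (\<Sum>i\<in>I. c i * d i)" using fin by (simp add: sum.delta)
  finally show ?thesis .
qed

lemma spec_K1:
  fixes A :: "real^'n::finite^'n"
  assumes sd: "spec_data A q \<mu>" and k: "k \<in> {1..CARD('n)}"
  shows "dim (span (q ` {1..k})) = k" "\<forall>x\<in>span (q ` {1..k}). x \<bullet> (A *v x) \<le> \<mu> k * (x \<bullet> x)"
proof -
  have onN: "orthonormal_on {1..CARD('n)} q" and eig: "\<forall>i\<in>{1..CARD('n)}. A *v q i = \<mu> i *\<^sub>R q i"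
    using sd unfolding spec_data_def by auto
  have on: "orthonormal_on {1..k} q" using onN k unfolding orthonormal_on_def by auto
  show "dim (span (q ` {1..k})) = k"
    using orthonormal_facts(3)[of "{1..k}" q] on unfolding orthonormal_on_def by simp
  have inj: "inj_on q {1..k}" using orthonormal_facts(1)[of "{1..k}" q] on unfolding orthonormal_on_def by simp
  show "\<forall>x\<in>span (q ` {1..k}). x \<bullet> (A *v x) \<le> \<mu> k * (x \<bullet> x)"
  proof
    fix x assume "x \<in> span (q ` {1..k})"
    then obtain u where "x = (\<Sum>v\<in>q ` {1..k}. u v *\<^sub>R v)" by (auto simp: span_finite)
    then have x: "x = (\<Sum>i\<in>{1..k}. u (q i) *\<^sub>R q i)" using sum.reindex[OF inj, of "\<lambda>v. u v *\<^sub>R v"] by simp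
    have Ax: "A *v x = (\<Sum>i\<in>{1..k}. (u (q i) * \<mu> i) *\<^sub>R q i)"
      unfolding x using eig k by (simp add: vec.sum matrix_vector_mult_scaleR)
    have "x \<bullet> (A *v x) = (\<Sum>i\<in>{1..k}. u (q i) * (u (q i) * \<mu> i))"
      unfolding Ax by (subst x, rule orth_sum_inner[OF on]) simp
    also have "\<dots> \<le> (\<Sum>i\<in>{1..k}. u (q i) * u (q i) * \<mu> k)"
    proof (rule sum_mono)
      fix i assume i: "i \<in> {1..k}"
      have "\<mu> i \<le> \<mu> k" using spec_sorted[OF sd, of i k] i k by auto
      then show "u (q i) * (u (q i) * \<mu> i) \<le> u (q i) * u (q i) * \<mu> k"
        by (simp add: mult.assoc[symmetric] mult_left_mono)
    qed
    also have "\<dots> = \<mu> k * (x \<bullet> x)"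
    proof -
      have "x \<bullet> x = (\<Sum>i\<in>{1..k}. u (q i) * u (q i))" unfolding x by (rule orth_sum_inner[OF on]) simp
      then show ?thesis by (simp add: sum_distrib_left algebra_simps)
    qed
    finally show "x \<bullet> (A *v x) \<le> \<mu> k * (x \<bullet> x)" .
  qed
qed

lemma spec_K2:
  fixes A :: "real^'n::finite^'n"
  assumes sd: "spec_data A q \<mu>" and k: "k \<in> {1..CARD('n)}" and U: "subspace U" and dU: "k \<le> dim U"
    and bound: "\<forall>x\<in>U. x \<bullet> (A *v x) \<le> t * (x \<bullet> x)"
  shows "\<mu> k \<le> t"
proof -
  have onN: "orthonormal_on {1..CARD('n)} q"
    and mini: "\<forall>k\<in>{1..CARD('n)}. \<forall>x. norm x = 1 \<and> (\<forall>i\<in>{1..<k}. x \<bullet> q i = 0) \<longrightarrow> \<mu> k \<le> x \<bullet> (A *v x)"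
    using sd unfolding spec_data_def by auto
  define W where "W = {y::real^'n. \<forall>i\<in>{1..<k}. y \<bullet> q i = 0}"
  have subW: "subspace W" unfolding W_def subspace_def by (auto simp: inner_add_left)
  have "orthonormal_on {1..<k} q" using onN k unfolding orthonormal_on_def by auto
  then have dimW: "dim W = CARD('n) - (k - 1)" unfolding W_def
    using perp_dim[of "{1..<k}" q] by (simp add: orthonormal_on_def)
  have "dim {x + y |x y. x \<in> U \<and> y \<in> W} + dim (U \<inter> W) = dim U + dim W"
    by (rule dim_sums_Int[OF U subW])
  moreover have "dim {x + y |x y. x \<in> U \<and> y \<in> W} \<le> CARD('n)" by (rule dim_subset_UNIV_cart)
  ultimately have "dim (U \<inter> W) \<ge> 1" using dU dimW k by auto
  have "\<not> U \<inter> W \<subseteq> {0}"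
  proof
    assume sub: "U \<inter> W \<subseteq> {0}"
    have "dim (U \<inter> W) = 0" using sub by (simp only: dim_eq_0)
    then show False using \<open>dim (U \<inter> W) \<ge> 1\<close> by linarith
  qed
  then obtain x where xU: "x \<in> U" and xW: "x \<in> W" and x0: "x \<noteq> 0" by auto
  define z where "z = x /\<^sub>R norm x"
  have nz: "norm z = 1" unfolding z_def using x0 by simp
  have "\<forall>i\<in>{1..<k}. z \<bullet> q i = 0" using xW unfolding W_def z_def by simp
  then have "\<mu> k \<le> z \<bullet> (A *v z)" using mini k nz by auto
  also have "z \<bullet> (A *v z) = (x \<bullet> (A *v x)) / (x \<bullet> x)"
    unfolding z_def by (simp add: matrix_vector_mult_scaleR power2_norm_eq_inner[symmetric] power2_eq_square field_simps)
  also have "\<dots> \<le> t" using bound xU x0 by (simp add: divide_le_eq)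
  finally show ?thesis .
qed

lemma eig_compare:
  fixes A B :: "real^'n::finite^'n"
  assumes sA: "transpose A = A" and sB: "transpose B = B"
    and le: "\<And>x. x \<bullet> (A *v x) \<le> x \<bullet> (B *v x) + c * (x \<bullet> x)" and k: "k \<in> {1..CARD('n)}"
  shows "eigval (cmat A) k \<le> eigval (cmat B) k + c"
proof -
  obtain qA \<mu>A where sdA: "spec_data A qA \<mu>A" using spec_exists[OF sA] by blast
  obtain qB \<mu>B where sdB: "spec_data B qB \<mu>B" using spec_exists[OF sB] by blast
  have "\<mu>A k \<le> \<mu>B k + c"
  proof (rule spec_K2[OF sdA k subspace_span])
    show "k \<le> dim (span (qB ` {1..k}))" using spec_K1(1)[OF sdB k] by simp
    show "\<forall>x\<in>span (qB ` {1..k}). x \<bullet> (A *v x) \<le> (\<mu>B k + c) * (x \<bullet> x)"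
    proof
      fix x assume "x \<in> span (qB ` {1..k})"
      then have "x \<bullet> (B *v x) \<le> \<mu>B k * (x \<bullet> x)" using spec_K1(2)[OF sdB k] by blast
      then show "x \<bullet> (A *v x) \<le> (\<mu>B k + c) * (x \<bullet> x)" using le[of x] by (simp add: algebra_simps)
    qed
  qed
  then show ?thesis using eigval_spec[OF sdA k] eigval_spec[OF sdB k] by simp
qed

lemma eig_interlace:
  fixes A B :: "real^'n::finite^'n"
  assumes sA: "transpose A = A" and sB: "transpose B = B"
    and le: "\<And>x. x $ w = 0 \<Longrightarrow> x \<bullet> (B *v x) \<le> x \<bullet> (A *v x)" and k: "1 \<le> k" "k + 1 \<le> CARD('n)"
  shows "eigval (cmat B) k \<le> eigval (cmat A) (k + 1)"
proof -
  obtain qA \<mu>A where sdA: "spec_data A qA \<mu>A" using spec_exists[OF sA] by blast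
  obtain qB \<mu>B where sdB: "spec_data B qB \<mu>B" using spec_exists[OF sB] by blast
  have k1: "k + 1 \<in> {1..CARD('n)}" and k0: "k \<in> {1..CARD('n)}" using k by auto
  define U0 where "U0 = span (qA ` {1..k+1})"
  define H where "H = {x::real^'n. axis w 1 \<bullet> x = 0}"
  have subH: "subspace H" unfolding H_def by (rule subspace_hyperplane)
  have dimH: "dim H = CARD('n) - 1" unfolding H_def using dim_hyperplane[of "axis w (1::real)"]
    by (simp add: axis_eq_0_iff)
  have sU0: "subspace U0" unfolding U0_def by simp
  have dU0: "dim U0 = k + 1" unfolding U0_def using spec_K1(1)[OF sdA k1] .
  have "dim {x + y |x y. x \<in> U0 \<and> y \<in> H} + dim (U0 \<inter> H) = dim U0 + dim H"
    by (rule dim_sums_Int[OF sU0 subH])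
  moreover have "dim {x + y |x y. x \<in> U0 \<and> y \<in> H} \<le> CARD('n)" by (rule dim_subset_UNIV_cart)
  ultimately have dU: "k \<le> dim (U0 \<inter> H)" using dU0 dimH k by auto
  have "\<mu>B k \<le> \<mu>A (k + 1)"
  proof (rule spec_K2[OF sdB k0 subspace_inter[OF sU0 subH] dU])
    show "\<forall>x\<in>U0 \<inter> H. x \<bullet> (B *v x) \<le> \<mu>A (k + 1) * (x \<bullet> x)"
    proof
      fix x assume x: "x \<in> U0 \<inter> H"
      then have "x $ w = 0" unfolding H_def by (simp add: inner_axis')
      then have "x \<bullet> (B *v x) \<le> x \<bullet> (A *v x)" by (rule le)
      also have "\<dots> \<le> \<mu>A (k + 1) * (x \<bullet> x)" using spec_K1(2)[OF sdA k1] x unfolding U0_def by blast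
      finally show "x \<bullet> (B *v x) \<le> \<mu>A (k + 1) * (x \<bullet> x)" .
    qed
  qed
  then show ?thesis using eigval_spec[OF sdA k1] eigval_spec[OF sdB k0] by simp
qed

lemma eig_trace:
  fixes A :: "real^'n::finite^'n"
  assumes sA: "transpose A = A"
  shows "(\<Sum>k=1..CARD('n). eigval (cmat A) k) = trace A"
proof -
  obtain q \<mu> where sd: "spec_data A q \<mu>" using spec_exists[OF sA] by blast
  have "(\<Sum>k=1..CARD('n). eigval (cmat A) k) = (\<Sum>k=1..CARD('n). \<mu> k)"
    by (rule sum.cong[OF refl]) (rule eigval_spec[OF sd], simp)
  then show ?thesis using spec_trace[OF sd] by simp
qed

lemma measure_union_intervals:
  fixes a b :: "nat \<Rightarrow> real"
  assumes ab: "\<And>n. 1 \<le> n \<Longrightarrow> n \<le> m \<Longrightarrow> a n \<le> b n"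
    and ba: "\<And>n. 1 \<le> n \<Longrightarrow> n < m \<Longrightarrow> b n \<le> a (Suc n)"
  shows "measure lborel (\<Union>n\<in>{1..m}. {a n..b n}) = (\<Sum>n=1..m. b n - a n)"
  using ab ba
proof (induction m)
  case 0 then show ?case by simp
next
  case (Suc m)
  have IH: "measure lborel (\<Union>n\<in>{1..m}. {a n..b n}) = (\<Sum>n=1..m. b n - a n)"
    using Suc.prems by (intro Suc.IH) auto
  define X where "X = (\<Union>n\<in>{1..m}. {a n..b n})"
  define Y where "Y = {a (Suc m)..b (Suc m)}"
  have bmono: "b n \<le> b m" if "1 \<le> n" "n \<le> m" for n
    using that(2,1)
  proof (induction m rule: dec_induct)
    case base then show ?case by simp
  next
    case (step k)
    have "b k \<le> a (Suc k)" using Suc.prems step by simp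
    also have "\<dots> \<le> b (Suc k)" using Suc.prems step by simp
    finally show ?case using step by simp
  qed
  have XY: "X \<inter> Y \<subseteq> {a (Suc m)}"
  proof
    fix x assume x: "x \<in> X \<inter> Y"
    then obtain n where n: "n \<in> {1..m}" "x \<in> {a n..b n}" unfolding X_def by auto
    then have "x \<le> b m" using bmono[of n] by auto
    also have "b m \<le> a (Suc m)" using Suc.prems n by auto
    finally show "x \<in> {a (Suc m)}" using x unfolding Y_def by auto
  qed
  have "AE x in lborel. x \<notin> X \<or> x \<notin> Y"
    using AE_lborel_singleton[of "a (Suc m)"] by eventually_elim (use XY in auto)
  moreover have "X \<in> fmeasurable lborel" unfolding X_def
    by (intro fmeasurable_compact compact_UN) auto
  moreover have "Y \<in> fmeasurable lborel" unfolding Y_def by (intro fmeasurable_compact) auto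
  ultimately have "measure lborel (X \<union> Y) = measure lborel X + measure lborel Y" by (rule measure_Un_AE)
  moreover have "(\<Union>n\<in>{1..Suc m}. {a n..b n}) = X \<union> Y" unfolding X_def Y_def
    by (auto simp: atLeastAtMostSuc_conv)
  moreover have "measure lborel Y = b (Suc m) - a (Suc m)" unfolding Y_def
    using Suc.prems by (simp add: measure_lborel_Icc)
  ultimately show ?case using IH unfolding X_def by simp
qed

lemma isCont_by_bound:
  fixes g h :: "real \<Rightarrow> real"
  assumes "\<And>t. \<bar>g t - g s\<bar> \<le> h t" and "isCont h s" and "h s = 0"
  shows "isCont g s"
proof -
  have "((\<lambda>t. g t - g s) \<longlongrightarrow> 0) (at s)"
  proof (rule Lim_null_comparison)
    show "\<forall>\<^sub>F x in at s. norm (g x - g s) \<le> h x" using assms(1) by simp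
    show "(h \<longlongrightarrow> 0) (at s)" using assms(2,3) unfolding isCont_def by simp
  qed
  then show ?thesis unfolding isCont_def by (simp add: LIM_zero_iff)
qed

definition Rm :: "('e::finite \<Rightarrow> 'v::finite) \<Rightarrow> ('e \<Rightarrow> 'v) \<Rightarrow> ('e \<Rightarrow> int^'d::finite) \<Rightarrow> ('v \<Rightarrow> real)
    \<Rightarrow> real^'d \<Rightarrow> real^'v^'v" where
  "Rm src tgt tau Q \<theta> = (\<chi> v u. (if v = u then 1 + Q v else 0)
      - (\<Sum>e\<in>{e. src e = v \<and> tgt e = u}. cos (ip (tau e) \<theta>)) / sqrt (real (deg src v) * real (deg src u)))"

definition dl :: "('e::finite \<Rightarrow> 'v::finite) \<Rightarrow> ('e \<Rightarrow> int^'d::finite) \<Rightarrow> real^'d \<Rightarrow> 'v \<Rightarrow> real" where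
  "dl src tau \<theta> v = (\<Sum>e\<in>{e. src e = v \<and> tau e \<noteq> 0}. 1 - cos (ip (tau e) \<theta>)) / real (deg src v)"

definition Dg :: "('n::finite \<Rightarrow> real) \<Rightarrow> real^'n^'n" where
  "Dg d = (\<chi> i j. if i = j then d i else 0)"

definition rev_ok :: "('e \<Rightarrow> 'e) \<Rightarrow> ('e \<Rightarrow> 'v) \<Rightarrow> ('e \<Rightarrow> 'v) \<Rightarrow> ('e \<Rightarrow> int^'d::finite) \<Rightarrow> bool" where
  "rev_ok rv src tgt tau \<longleftrightarrow> (\<forall>e. rv (rv e) = e \<and> src (rv e) = tgt e \<and> tgt (rv e) = src e \<and> tau (rv e) = - tau e)"

lemma ip_zero_left[simp]: "ip 0 \<theta> = 0" by (simp add: ip_def)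
lemma ip_zero_right[simp]: "ip m 0 = 0" by (simp add: ip_def)
lemma ip_neg: "ip (- m) \<theta> = - ip m \<theta>" by (simp add: ip_def sum_negf)
lemma ip_scale: "ip m (t *\<^sub>R \<theta>) = t * ip m \<theta>" by (simp add: ip_def sum_distrib_left algebra_simps)

lemma sum_rev:
  assumes r: "rev_ok rv src tgt tau"
  shows "(\<Sum>e\<in>{e. src e = u \<and> tgt e = v}. f e) = (\<Sum>e\<in>{e. src e = v \<and> tgt e = u}. f (rv e))"
  using r unfolding rev_ok_def
  by (intro sum.reindex_bij_witness[of _ rv rv]) auto

lemma sin_sum_zero:
  assumes r: "rev_ok rv src tgt tau" and loop: "is_loop_graph src tgt tau"
  shows "(\<Sum>e\<in>{e. src e = v \<and> tgt e = u}. sin (ip (tau e) \<theta>)) = 0"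
proof (cases "v = u")
  case True
  have "(\<Sum>e\<in>{e. src e = v \<and> tgt e = u}. sin (ip (tau e) \<theta>))
      = (\<Sum>e\<in>{e. src e = u \<and> tgt e = v}. sin (ip (tau (rv e)) \<theta>))"
    by (rule sum_rev[OF r])
  also have "\<dots> = - (\<Sum>e\<in>{e. src e = v \<and> tgt e = u}. sin (ip (tau e) \<theta>))"
    using r True unfolding rev_ok_def by (simp add: ip_neg sum_negf)
  finally show ?thesis by simp
next
  case False
  have "tau e = 0" if "src e = v" "tgt e = u" for e
    using loop False that unfolding is_loop_graph_def by auto
  then show ?thesis by simp
qed

lemma fiber_eq:
  assumes r: "rev_ok rv src tgt tau" and loop: "is_loop_graph src tgt tau"
  shows "fiber_op src tgt tau Q \<theta> = cmat (Rm src tgt tau Q \<theta>)"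
proof (subst vec_eq_iff, intro allI, subst vec_eq_iff, intro allI)
  fix v u
  let ?S = "{e. src e = v \<and> tgt e = u}"
  let ?sq = "sqrt (real (deg src v) * real (deg src u))"
  have re: "Re (fiber_op src tgt tau Q \<theta> $ v $ u) = Rm src tgt tau Q \<theta> $ v $ u"
    unfolding fiber_op_def Rm_def by (simp add: Re_divide_of_real sum_divide_distrib)
  have im: "Im (fiber_op src tgt tau Q \<theta> $ v $ u) = 0"
  proof -
    have "Im (fiber_op src tgt tau Q \<theta> $ v $ u) = - (\<Sum>e\<in>?S. sin (ip (tau e) \<theta>)) / ?sq"
      unfolding fiber_op_def by (simp add: Im_divide_of_real sum_divide_distrib)
    then show ?thesis using sin_sum_zero[OF r loop] by simp
  qed
  show "fiber_op src tgt tau Q \<theta> $ v $ u = cmat (Rm src tgt tau Q \<theta>) $ v $ u"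
    by (rule complex_eqI) (simp_all add: re im cmat_def)
qed

lemma Rm_sym:
  assumes r: "rev_ok rv src tgt tau"
  shows "transpose (Rm src tgt tau Q \<theta>) = Rm src tgt tau Q \<theta>"
proof (subst vec_eq_iff, intro allI, subst vec_eq_iff, intro allI)
  fix v u
  have "(\<Sum>e\<in>{e. src e = u \<and> tgt e = v}. cos (ip (tau e) \<theta>))
      = (\<Sum>e\<in>{e. src e = v \<and> tgt e = u}. cos (ip (tau (rv e)) \<theta>))"
    by (rule sum_rev[OF r])
  also have "\<dots> = (\<Sum>e\<in>{e. src e = v \<and> tgt e = u}. cos (ip (tau e) \<theta>))"
    using r unfolding rev_ok_def by (simp add: ip_neg)
  finally show "transpose (Rm src tgt tau Q \<theta>) $ v $ u = Rm src tgt tau Q \<theta> $ v $ u"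
    unfolding Rm_def transpose_def by (simp add: mult.commute)
qed

lemma Rm_split:
  assumes loop: "is_loop_graph src tgt tau"
  shows "Rm src tgt tau Q \<theta> = Rm src tgt tau Q 0 + Dg (dl src tau \<theta>)"
proof (subst vec_eq_iff, intro allI, subst vec_eq_iff, intro allI)
  fix v u
  show "Rm src tgt tau Q \<theta> $ v $ u = (Rm src tgt tau Q 0 + Dg (dl src tau \<theta>)) $ v $ u"
  proof (cases "v = u")
    case False
    have "tau e = 0" if "src e = v" "tgt e = u" for e
      using loop False that unfolding is_loop_graph_def by auto
    then have "(\<Sum>e\<in>{e. src e = v \<and> tgt e = u}. cos (ip (tau e) \<theta>))
        = (\<Sum>e\<in>{e. src e = v \<and> tgt e = u}. cos (ip (tau e) 0))" by (intro sum.cong) auto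
    then show ?thesis using False unfolding Rm_def Dg_def by simp
  next
    case True
    let ?L = "{e. src e = v \<and> tgt e = v}"
    let ?B = "{e. src e = v \<and> tau e \<noteq> 0}"
    have BL: "?B \<subseteq> ?L" using loop unfolding is_loop_graph_def by auto
    have "(\<Sum>e\<in>?L. 1 - cos (ip (tau e) \<theta>)) = (\<Sum>e\<in>?B. 1 - cos (ip (tau e) \<theta>))"
      by (rule sum.mono_neutral_right) (use BL in auto)
    then have "(\<Sum>e\<in>?L. cos (ip (tau e) \<theta>)) = (\<Sum>e\<in>?L. cos (ip (tau e) 0)) - (\<Sum>e\<in>?B. 1 - cos (ip (tau e) \<theta>))"
      by (simp add: sum_subtractf)
    moreover have "sqrt (real (deg src v) * real (deg src v)) = real (deg src v)" by simp
    ultimately show ?thesis using True unfolding Rm_def Dg_def dl_def by (simp add: diff_divide_distrib)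
  qed
qed

lemma quad_Dg:
  fixes A :: "real^'n::finite^'n"
  shows "x \<bullet> ((A + Dg d) *v x) = x \<bullet> (A *v x) + (\<Sum>i\<in>UNIV. d i * (x $ i * x $ i))"
proof -
  have "Dg d *v x = (\<chi> i. d i * x $ i)"
  proof (subst vec_eq_iff, intro allI)
    fix i
    have "(Dg d *v x) $ i = (\<Sum>j\<in>UNIV. if i = j then d i * x $ j else 0)"
      unfolding Dg_def matrix_vector_mult_def by (simp only: vec_lambda_beta) (intro sum.cong, auto)
    then show "(Dg d *v x) $ i = (\<chi> i. d i * x $ i) $ i" by simp
  qed
  then show ?thesis by (simp add: matrix_vector_mult_add_rdistrib inner_add_right inner_vec_def algebra_simps sum.distrib)
qed

lemma G_rev: "periodic_graph_data src tgt rv tau \<Longrightarrow> rev_ok rv src tgt tau"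
  unfolding periodic_graph_data_def rev_ok_def by auto

lemma band_fun_eq:
  assumes r: "rev_ok rv src tgt tau" and loop: "is_loop_graph src tgt tau"
  shows "band_fun src tgt tau Q n \<theta> = eigval (cmat (Rm src tgt tau Q \<theta>)) n"
  unfolding band_fun_def fiber_eq[OF r loop] ..

lemma dl_nonneg: "0 \<le> dl src tau \<theta> v"
  unfolding dl_def by (intro divide_nonneg_nonneg sum_nonneg) auto

lemma dl_zero: "dl src tau 0 v = 0"
  unfolding dl_def by simp

lemma quad_Rm:
  assumes loop: "is_loop_graph src tgt tau"
  shows "x \<bullet> (Rm src tgt tau Q \<theta> *v x) = x \<bullet> (Rm src tgt tau Q 0 *v x) + (\<Sum>i\<in>UNIV. dl src tau \<theta> i * (x $ i * x $ i))"
  by (subst Rm_split[OF loop]) (rule quad_Dg)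

lemma band_lip:
  fixes src tgt :: "'e::finite \<Rightarrow> 'v::finite" and tau :: "'e \<Rightarrow> int^'d::finite"
  assumes r: "rev_ok rv src tgt tau" and loop: "is_loop_graph src tgt tau" and n: "n \<in> {1..CARD('v::finite)}"
  shows "band_fun src tgt tau Q n \<theta> \<le> band_fun src tgt tau Q n \<theta>'
     + (\<Sum>v\<in>(UNIV::'v set). \<bar>dl src tau \<theta> v - dl src tau \<theta>' v\<bar>)"
proof -
  let ?c = "(\<Sum>v\<in>(UNIV::'v set). \<bar>dl src tau \<theta> v - dl src tau \<theta>' v\<bar>)"
  have le: "x \<bullet> (Rm src tgt tau Q \<theta> *v x) \<le> x \<bullet> (Rm src tgt tau Q \<theta>' *v x) + ?c * (x \<bullet> x)" for x :: "real^'v"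
  proof -
    have "(\<Sum>i\<in>UNIV. dl src tau \<theta> i * (x $ i * x $ i)) - (\<Sum>i\<in>UNIV. dl src tau \<theta>' i * (x $ i * x $ i))
        = (\<Sum>i\<in>UNIV. (dl src tau \<theta> i - dl src tau \<theta>' i) * (x $ i * x $ i))"
      by (simp add: sum_subtractf left_diff_distrib)
    also have "\<dots> \<le> (\<Sum>i\<in>UNIV. ?c * (x $ i * x $ i))"
    proof (rule sum_mono)
      fix i :: 'v
      have "dl src tau \<theta> i - dl src tau \<theta>' i \<le> \<bar>dl src tau \<theta> i - dl src tau \<theta>' i\<bar>" by simp
      also have "\<dots> \<le> ?c" by (rule member_le_sum) auto
      finally show "(dl src tau \<theta> i - dl src tau \<theta>' i) * (x $ i * x $ i) \<le> ?c * (x $ i * x $ i)"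
        by (rule mult_right_mono) simp
    qed
    also have "\<dots> = ?c * (x \<bullet> x)" by (simp add: inner_vec_def sum_distrib_left)
    finally show ?thesis using quad_Rm[OF loop, where x=x and \<theta>=\<theta> and Q=Q] quad_Rm[OF loop, where x=x and \<theta>=\<theta>' and Q=Q] by simp
  qed
  show ?thesis unfolding band_fun_eq[OF r loop]
    by (rule eig_compare[OF Rm_sym[OF r] Rm_sym[OF r] le n])
qed

lemma band_mono:
  fixes src tgt :: "'e::finite \<Rightarrow> 'v::finite" and tau :: "'e \<Rightarrow> int^'d::finite"
  assumes r: "rev_ok rv src tgt tau" and loop: "is_loop_graph src tgt tau" and n: "n \<in> {1..CARD('v::finite)}"
    and dle: "\<And>v::'v. dl src tau \<theta> v \<le> dl src tau \<theta>' v"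
  shows "band_fun src tgt tau Q n \<theta> \<le> band_fun src tgt tau Q n \<theta>'"
proof -
  have le: "x \<bullet> (Rm src tgt tau Q \<theta> *v x) \<le> x \<bullet> (Rm src tgt tau Q \<theta>' *v x) + 0 * (x \<bullet> x)" for x :: "real^'v"
  proof -
    have "(\<Sum>i\<in>UNIV. dl src tau \<theta> i * (x $ i * x $ i)) \<le> (\<Sum>i\<in>UNIV. dl src tau \<theta>' i * (x $ i * x $ i))"
      by (intro sum_mono mult_right_mono dle) simp
    then show ?thesis using quad_Rm[OF loop, where x=x and \<theta>=\<theta> and Q=Q] quad_Rm[OF loop, where x=x and \<theta>=\<theta>' and Q=Q] by simp
  qed
  show ?thesis unfolding band_fun_eq[OF r loop]
    using eig_compare[OF Rm_sym[OF r] Rm_sym[OF r] le n] by simp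
qed

lemma band_cont:
  fixes src tgt :: "'e::finite \<Rightarrow> 'v::finite" and tau :: "'e \<Rightarrow> int^'d::finite"
  assumes r: "rev_ok rv src tgt tau" and loop: "is_loop_graph src tgt tau" and n: "n \<in> {1..CARD('v::finite)}"
  shows "continuous_on S (\<lambda>t. band_fun src tgt tau Q n (t *\<^sub>R (\<theta>0::real^'d::finite)))"
proof (rule continuous_at_imp_continuous_on, intro ballI)
  fix s
  let ?g = "\<lambda>t. band_fun src tgt tau Q n (t *\<^sub>R \<theta>0)"
  let ?h = "\<lambda>t. (\<Sum>v\<in>(UNIV::'v set). \<bar>dl src tau (t *\<^sub>R \<theta>0) v - dl src tau (s *\<^sub>R \<theta>0) v\<bar>)"
  show "isCont ?g s"
  proof (rule isCont_by_bound)
    show "\<bar>?g t - ?g s\<bar> \<le> ?h t" for t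
    proof -
      have "?g t \<le> ?g s + ?h t" by (rule band_lip[OF r loop n])
      moreover have "?g s \<le> ?g t + ?h t"
        using band_lip[OF r loop n, of Q "s *\<^sub>R \<theta>0" "t *\<^sub>R \<theta>0"] by (simp add: abs_minus_commute)
      ultimately show ?thesis by simp
    qed
    show "isCont ?h s" unfolding dl_def ip_scale divide_inverse by (intro continuous_intros)
    show "?h s = 0" by simp
  qed
qed

lemma dl_le_exact:
  assumes ex: "exact_quasimomentum tau \<theta>0"
  shows "dl src tau \<theta> v \<le> dl src tau \<theta>0 v"
  unfolding dl_def
proof (rule divide_right_mono)
  show "(\<Sum>e\<in>{e. src e = v \<and> tau e \<noteq> 0}. 1 - cos (ip (tau e) \<theta>)) \<le> (\<Sum>e\<in>{e. src e = v \<and> tau e \<noteq> 0}. 1 - cos (ip (tau e) \<theta>0))"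
    using ex unfolding exact_quasimomentum_def by (intro sum_mono) auto
qed simp

lemma dl_exact:
  assumes ex: "exact_quasimomentum tau \<theta>0"
  shows "dl src tau \<theta>0 v = 2 * real (card {e. src e = v \<and> tau e \<noteq> 0}) / real (deg src v)"
proof -
  have "(\<Sum>e\<in>{e. src e = v \<and> tau e \<noteq> 0}. 1 - cos (ip (tau e) \<theta>0)) = (\<Sum>e\<in>{e. src e = v \<and> tau e \<noteq> 0}. 2)"
    using ex unfolding exact_quasimomentum_def by (intro sum.cong) auto
  then show ?thesis unfolding dl_def by simp
qed

lemma band_interval:
  fixes src tgt :: "'e::finite \<Rightarrow> 'v::finite" and tau :: "'e \<Rightarrow> int^'d::finite"
  assumes r: "rev_ok rv src tgt tau" and loop: "is_loop_graph src tgt tau" and n: "n \<in> {1..CARD('v)}"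
    and ex: "exact_quasimomentum tau \<theta>0"
  shows "band src tgt tau Q n = {band_fun src tgt tau Q n 0 .. band_fun src tgt tau Q n \<theta>0}"
proof
  show "band src tgt tau Q n \<subseteq> {band_fun src tgt tau Q n 0 .. band_fun src tgt tau Q n \<theta>0}"
  proof
    fix y assume "y \<in> band src tgt tau Q n"
    then obtain \<theta> where y: "y = band_fun src tgt tau Q n \<theta>" unfolding band_def by auto
    have "band_fun src tgt tau Q n 0 \<le> y" unfolding y
      by (rule band_mono[OF r loop n]) (simp add: dl_zero dl_nonneg)
    moreover have "y \<le> band_fun src tgt tau Q n \<theta>0" unfolding y
      by (rule band_mono[OF r loop n]) (rule dl_le_exact[OF ex])
    ultimately show "y \<in> {band_fun src tgt tau Q n 0 .. band_fun src tgt tau Q n \<theta>0}" by simp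
  qed
  show "{band_fun src tgt tau Q n 0 .. band_fun src tgt tau Q n \<theta>0} \<subseteq> band src tgt tau Q n"
  proof
    fix y assume y: "y \<in> {band_fun src tgt tau Q n 0 .. band_fun src tgt tau Q n \<theta>0}"
    let ?g = "\<lambda>t. band_fun src tgt tau Q n (t *\<^sub>R \<theta>0)"
    have "\<exists>t\<ge>0. t \<le> 1 \<and> ?g t = y"
      by (rule IVT') (use y band_cont[OF r loop n] in auto)
    then show "y \<in> band src tgt tau Q n" unfolding band_def by auto
  qed
qed

theorem theorem2p3:
  fixes src tgt :: "'e::finite \<Rightarrow> 'v::finite"
    and rv :: "'e \<Rightarrow> 'e"
    and tau :: "'e \<Rightarrow> int^'d::finite"
    and Q :: "'v \<Rightarrow> real"
  assumes d2: "CARD('d) \<ge> 2"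
    and G: "periodic_graph_data src tgt rv tau"
  shows "(is_loop_graph src tgt tau \<longrightarrow>
           (\<forall>n\<in>{1..CARD('v)}. band_min src tgt tau Q n = band_fun src tgt tau Q n 0))
    \<and> (\<forall>\<theta>0. is_loop_graph src tgt tau \<longrightarrow> exact_quasimomentum tau \<theta>0 \<longrightarrow>
           (\<forall>n\<in>{1..CARD('v)}.
              band src tgt tau Q n = {band_min src tgt tau Q n .. band_max src tgt tau Q n}
            \<and> band src tgt tau Q n = {band_fun src tgt tau Q n 0 .. band_fun src tgt tau Q n \<theta>0})
           \<and> (\<Sum>n=1..CARD('v). measure lborel (band src tgt tau Q n)) = 2 * beta_const src tau
           \<and> ((\<exists>v. \<forall>e. tau e \<noteq> 0 \<longrightarrow> src e = v \<and> tgt e = v) \<longrightarrow>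
                measure lborel (spectrum_H src tgt tau Q)
                  = (\<Sum>n=1..CARD('v). measure lborel (band src tgt tau Q n))
              \<and> measure lborel (spectrum_H src tgt tau Q) = 2 * beta_const src tau))"
proof -
  have r: "rev_ok rv src tgt tau" using G by (rule G_rev)
  let ?bf = "band_fun src tgt tau Q"
  let ?N = "CARD('v)"
  have P1: "is_loop_graph src tgt tau \<longrightarrow>
           (\<forall>n\<in>{1..CARD('v)}. band_min src tgt tau Q n = band_fun src tgt tau Q n 0)"
  proof (intro impI ballI)
    fix n assume loop: "is_loop_graph src tgt tau" and n: "n \<in> {1..CARD('v)}"
    have "Inf (band src tgt tau Q n) = ?bf n 0"
    proof (rule cInf_eq_minimum)
      show "?bf n 0 \<in> band src tgt tau Q n" unfolding band_def by simp
      fix y assume "y \<in> band src tgt tau Q n"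
      then obtain \<theta> where y: "y = ?bf n \<theta>" unfolding band_def by auto
      show "?bf n 0 \<le> y" unfolding y
        by (rule band_mono[OF r loop n]) (simp add: dl_zero dl_nonneg)
    qed
    then show "band_min src tgt tau Q n = ?bf n 0" unfolding band_min_def .
  qed
  have P2: "\<forall>\<theta>0. is_loop_graph src tgt tau \<longrightarrow> exact_quasimomentum tau \<theta>0 \<longrightarrow>
           (\<forall>n\<in>{1..CARD('v)}.
              band src tgt tau Q n = {band_min src tgt tau Q n .. band_max src tgt tau Q n}
            \<and> band src tgt tau Q n = {band_fun src tgt tau Q n 0 .. band_fun src tgt tau Q n \<theta>0})
           \<and> (\<Sum>n=1..CARD('v). measure lborel (band src tgt tau Q n)) = 2 * beta_const src tau
           \<and> ((\<exists>v. \<forall>e. tau e \<noteq> 0 \<longrightarrow> src e = v \<and> tgt e = v) \<longrightarrow>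
                measure lborel (spectrum_H src tgt tau Q)
                  = (\<Sum>n=1..CARD('v). measure lborel (band src tgt tau Q n))
              \<and> measure lborel (spectrum_H src tgt tau Q) = 2 * beta_const src tau)"
  proof (intro allI impI)
    fix \<theta>0 :: "real^'d" assume loop: "is_loop_graph src tgt tau" and ex: "exact_quasimomentum tau \<theta>0"
    have bi: "band src tgt tau Q n = {?bf n 0 .. ?bf n \<theta>0}" if "n \<in> {1..?N}" for n
      by (rule band_interval[OF r loop that ex])
    have ab: "?bf n 0 \<le> ?bf n \<theta>0" if "n \<in> {1..?N}" for n
      by (rule band_mono[OF r loop that]) (rule dl_le_exact[OF ex])
    have A1: "\<forall>n\<in>{1..CARD('v)}.
              band src tgt tau Q n = {band_min src tgt tau Q n .. band_max src tgt tau Q n}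
            \<and> band src tgt tau Q n = {band_fun src tgt tau Q n 0 .. band_fun src tgt tau Q n \<theta>0}"
    proof
      fix n assume n: "n \<in> {1..?N}"
      have "band_min src tgt tau Q n = ?bf n 0" unfolding band_min_def bi[OF n] using ab[OF n] by simp
      moreover have "band_max src tgt tau Q n = ?bf n \<theta>0" unfolding band_max_def bi[OF n] using ab[OF n] by simp
      ultimately show "band src tgt tau Q n = {band_min src tgt tau Q n .. band_max src tgt tau Q n}
            \<and> band src tgt tau Q n = {?bf n 0 .. ?bf n \<theta>0}" using bi[OF n] by simp
    qed
    have meas: "(\<Sum>n=1..?N. measure lborel (band src tgt tau Q n)) = (\<Sum>n=1..?N. ?bf n \<theta>0 - ?bf n 0)"
      by (rule sum.cong[OF refl]) (simp add: bi ab measure_lborel_Icc)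
    have A2: "(\<Sum>n=1..?N. measure lborel (band src tgt tau Q n)) = 2 * beta_const src tau"
    proof -
      have "(\<Sum>n=1..?N. ?bf n \<theta>0 - ?bf n 0) = (\<Sum>n=1..?N. ?bf n \<theta>0) - (\<Sum>n=1..?N. ?bf n 0)"
        by (simp add: sum_subtractf)
      also have "\<dots> = trace (Rm src tgt tau Q \<theta>0) - trace (Rm src tgt tau Q 0)"
        unfolding band_fun_eq[OF r loop] by (simp only: eig_trace[OF Rm_sym[OF r]])
      also have "\<dots> = trace (Dg (dl src tau \<theta>0))" by (subst Rm_split[OF loop]) (simp add: trace_add)
      also have "\<dots> = (\<Sum>v\<in>UNIV. dl src tau \<theta>0 v)" unfolding trace_def Dg_def by simp
      also have "\<dots> = 2 * beta_const src tau"
        unfolding beta_const_def dl_exact[OF ex] by (simp add: sum_distrib_left)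
      finally show ?thesis using meas by simp
    qed
    have A3: "(\<exists>v. \<forall>e. tau e \<noteq> 0 \<longrightarrow> src e = v \<and> tgt e = v) \<longrightarrow>
                measure lborel (spectrum_H src tgt tau Q)
                  = (\<Sum>n=1..CARD('v). measure lborel (band src tgt tau Q n))
              \<and> measure lborel (spectrum_H src tgt tau Q) = 2 * beta_const src tau"
    proof
      assume "\<exists>v. \<forall>e. tau e \<noteq> 0 \<longrightarrow> src e = v \<and> tgt e = v"
      then obtain w where w: "\<And>e. tau e \<noteq> 0 \<Longrightarrow> src e = w \<and> tgt e = w" by blast
      have dlw: "dl src tau \<theta>0 v = 0" if "v \<noteq> w" for v
      proof -
        have "{e. src e = v \<and> tau e \<noteq> 0} = {}" using w that by auto
        then show ?thesis unfolding dl_def by simp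
      qed
      have inter: "?bf n \<theta>0 \<le> ?bf (Suc n) 0" if "1 \<le> n" "n < ?N" for n
      proof -
        have le: "x \<bullet> (Rm src tgt tau Q \<theta>0 *v x) \<le> x \<bullet> (Rm src tgt tau Q 0 *v x)" if xw: "x $ w = 0" for x :: "real^'v"
        proof -
          have "(\<Sum>i\<in>UNIV. dl src tau \<theta>0 i * (x $ i * x $ i)) = 0"
            by (rule sum.neutral) (metis dlw xw mult_zero_left mult_zero_right)
          then show ?thesis using quad_Rm[OF loop, where x=x and \<theta>=\<theta>0 and Q=Q] by simp
        qed
        have "eigval (cmat (Rm src tgt tau Q \<theta>0)) n \<le> eigval (cmat (Rm src tgt tau Q 0)) (n + 1)"
          by (rule eig_interlace[OF Rm_sym[OF r] Rm_sym[OF r] le]) (use that in auto)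
        then show ?thesis unfolding band_fun_eq[OF r loop] by simp
      qed
      have "spectrum_H src tgt tau Q = (\<Union>n\<in>{1..?N}. {?bf n 0 .. ?bf n \<theta>0})"
        unfolding spectrum_H_def using bi by auto
      then have "measure lborel (spectrum_H src tgt tau Q) = (\<Sum>n=1..?N. ?bf n \<theta>0 - ?bf n 0)"
        using measure_union_intervals[of ?N "\<lambda>n. ?bf n 0" "\<lambda>n. ?bf n \<theta>0"] ab inter by simp
      then show "measure lborel (spectrum_H src tgt tau Q)
                  = (\<Sum>n=1..CARD('v). measure lborel (band src tgt tau Q n))
              \<and> measure lborel (spectrum_H src tgt tau Q) = 2 * beta_const src tau"
        using meas A2 by simp
    qed
    show "(\<forall>n\<in>{1..CARD('v)}.
              band src tgt tau Q n = {band_min src tgt tau Q n .. band_max src tgt tau Q n}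
            \<and> band src tgt tau Q n = {band_fun src tgt tau Q n 0 .. band_fun src tgt tau Q n \<theta>0})
           \<and> (\<Sum>n=1..CARD('v). measure lborel (band src tgt tau Q n)) = 2 * beta_const src tau
           \<and> ((\<exists>v. \<forall>e. tau e \<noteq> 0 \<longrightarrow> src e = v \<and> tgt e = v) \<longrightarrow>
                measure lborel (spectrum_H src tgt tau Q)
                  = (\<Sum>n=1..CARD('v). measure lborel (band src tgt tau Q n))
              \<and> measure lborel (spectrum_H src tgt tau Q) = 2 * beta_const src tau)"
      using A1 A2 A3 by blast
  qed
  show ?thesis using P1 P2 by blast
qed

end
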